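(* Let $G=([k],E)$ be realisable in $\mathbb{R}^d$ with profile $\boldsymbol\lambda$, where $\lambda_i\ge 2$ for every $i\in[k]$. If the girth of $G$ is $2\ell+1$ with $\ell>1$, then $\zeta(G,\boldsymbol\lambda)\le\frac d2$. If the girth of $G$ is $2\ell$ with $\ell>2$, then $\zeta(G,\boldsymbol\lambda)\le\frac{\ell}{2\ell-1}d$.
   Context: The girth of a graph is the length of its shortest cycle. A sphere of dimension $\ell$ in $\mathbb{R}^d$ ($0\le\ell\le d-1$) is the set of points of an $(\ell+1)$-dimensional affine subspace at a fixed positive distance from a fixed point of that subspace. For finite sets $P_1,\dots,P_k\subset\mathbb{R}^d$, the profile of $(P_1,\dots,P_k)$ is $\boldsymbol\lambda=(\lambda_1,\dots,\lambda_k)$, where $\lambda_i=0$ if $|P_i|\le 3$, and otherwise $\lambda_i$ is the smallest $\ell$ such that some sphere of dimension $\ell$ contains $P_i$, with $\lambda_i=d$ if no sphere contains $P_i$. A graph $G=([k],E)$ is compatible with $(P_1,\dots,P_k)$ if $\|p-p'\|=1$ for every edge $\{i,j\}\in E$ and all $p\in P_i$, $p'\in P_j$. $G$ is realisable in $\mathbb{R}^d$ with profile $\boldsymbol\lambda$ if there exist finite sets $P_1,\dots,P_k\subset\mathbb{R}^d$ with profile $\boldsymbol\lambda$ that are compatible with $G$. For $i\in[k]$ let $V_i=\{j\in[k]\setminus\{i\}:\{i,j\}\notin E\}$. $\zeta(G,\boldsymbol\lambda)$ denotes the optimum value of the linear program: minimize $\sum_{i\in[k]}\lambda_ix_i$ over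 $\mathbf{x}\in\mathbb{R}^k$ subject to $x_i\ge 0$ and $\lambda_ix_i+\sum_{j\in V_i}x_j\ge 1$ for all $i\in[k]$. *)

theory Defs
  imports "HOL-Analysis.Analysis"
begin

definition simple_graph :: "nat \<Rightarrow> nat set set \<Rightarrow> bool" where
  "simple_graph k E \<longleftrightarrow>
     E \<subseteq> {{i, j} | i j. i \<in> {1..k} \<and> j \<in> {1..k} \<and> i \<noteq> j}"

definition is_cycle :: "nat \<Rightarrow> nat set set \<Rightarrow> nat list \<Rightarrow> bool" where
  "is_cycle k E vs \<longleftrightarrow> length vs \<ge> 3 \<and> distinct vs \<and> set vs \<subseteq> {1..k} \<and>
     (\<forall>i < length vs. {vs ! i, vs ! ((i + 1) mod length vs)} \<in> E)"

definition has_girth :: "nat \<Rightarrow> nat set set \<Rightarrow> nat \<Rightarrow> bool" where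
  "has_girth k E g \<longleftrightarrow> (\<exists>vs. is_cycle k E vs \<and> length vs = g) \<and>
     (\<forall>vs. is_cycle k E vs \<longrightarrow> g \<le> length vs)"

definition is_sphere :: "'a::euclidean_space set \<Rightarrow> nat \<Rightarrow> bool" where
  "is_sphere S l \<longleftrightarrow> (\<exists>A c r. affine A \<and> aff_dim A = int l + 1 \<and> c \<in> A \<and> r > 0 \<and>
     S = {x \<in> A. dist x c = r})"

definition profile_val :: "'a::euclidean_space set \<Rightarrow> nat" where
  "profile_val P =
    (if card P \<le> 3 then 0
     else if (\<exists>l S. is_sphere S l \<and> P \<subseteq> S) then (LEAST l. \<exists>S. is_sphere S l \<and> P \<subseteq> S)
     else DIM('a))"

definition compatible :: "nat set set \<Rightarrow> (nat \<Rightarrow> 'a::euclidean_space set) \<Rightarrow> bool" where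
  "compatible E P \<longleftrightarrow> (\<forall>i j. {i, j} \<in> E \<longrightarrow> (\<forall>p \<in> P i. \<forall>p' \<in> P j. dist p p' = 1))"

definition realisable_with_profile ::
  "'a::euclidean_space itself \<Rightarrow> nat \<Rightarrow> nat set set \<Rightarrow> (nat \<Rightarrow> nat) \<Rightarrow> bool" where
  "realisable_with_profile _ k E lam \<longleftrightarrow>
     (\<exists>P :: nat \<Rightarrow> 'a set. (\<forall>i \<in> {1..k}. finite (P i) \<and> profile_val (P i) = lam i) \<and>
        compatible E P)"

definition nonnbrs :: "nat \<Rightarrow> nat set set \<Rightarrow> nat \<Rightarrow> nat set" where
  "nonnbrs k E i = {j \<in> {1..k}. j \<noteq> i \<and> {i, j} \<notin> E}"

definition zeta :: "nat \<Rightarrow> nat set set \<Rightarrow> (nat \<Rightarrow> nat) \<Rightarrow> real" where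
  "zeta k E lam = Inf {(\<Sum>i\<in>{1..k}. real (lam i) * x i) | x :: nat \<Rightarrow> real.
      \<forall>i \<in> {1..k}. x i \<ge> 0 \<and> real (lam i) * x i + (\<Sum>j \<in> nonnbrs k E i. x j) \<ge> 1}"

end

theory Submission
  imports Defs
begin

definition orth :: "'a::euclidean_space set \<Rightarrow> 'a set \<Rightarrow> bool" where
  "orth A B \<longleftrightarrow> (\<forall>x\<in>A. \<forall>y\<in>B. x \<bullet> y = 0)"

lemma dim_le_DIM: "dim (S::'a::euclidean_space set) \<le> DIM('a)"
  using dim_subset[of S UNIV] by simp

lemma orth_sum_dim:
  fixes A B :: "'a::euclidean_space set"
  assumes "subspace A" "subspace B" "orth A B"
  shows "dim A + dim B \<le> DIM('a)"
proof -
  have "A \<inter> B \<subseteq> {0}"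
  proof
    fix x assume "x \<in> A \<inter> B"
    then have "x \<bullet> x = 0" using assms(3) unfolding orth_def by blast
    then show "x \<in> {0}" by simp
  qed
  then have "dim (A \<inter> B) = 0"
    by simp
  then show ?thesis using dim_sums_Int[OF assms(1,2)] dim_le_DIM[of "{x + y |x y. x \<in> A \<and> y \<in> B}"]
    by linarith
qed

lemma orth_three:
  fixes A B C :: "'a::euclidean_space set"
  assumes "subspace A" "subspace B" "subspace C" "orth A B" "orth A C"
  shows "dim A + dim B + dim C \<le> DIM('a) + dim (B \<inter> C)"
proof -
  let ?S = "{x + y |x y. x \<in> B \<and> y \<in> C}"
  have s: "subspace ?S" using subspace_sums assms by blast
  have "orth A ?S" using assms(4,5) unfolding orth_def by (auto simp: inner_add_right)
  then have "dim A + dim ?S \<le> DIM('a)" using orth_sum_dim assms(1) s by blast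
  then show ?thesis using dim_sums_Int[OF assms(2,3)] by linarith
qed

lemma orth_sym: "orth A B \<Longrightarrow> orth B A"
  unfolding orth_def by (metis inner_commute)

lemma orth_mono: "orth A B \<Longrightarrow> A' \<subseteq> A \<Longrightarrow> B' \<subseteq> B \<Longrightarrow> orth A' B'"
  unfolding orth_def by blast

lemma odd_cycle_dim:
  fixes U :: "nat \<Rightarrow> 'a::euclidean_space set"
  assumes "\<And>i. subspace (U i)"
    and "\<And>i. i < 2*m+2 \<Longrightarrow> orth (U i) (U (Suc i))"
    and "orth (U (2*m+2)) (U 0)"
  shows "(\<Sum>i<2*m+3. dim (U i)) \<le> (m+1) * DIM('a)"
  using assms
proof (induction m arbitrary: U)
  case 0
  have "dim (U 1 \<inter> U 2) = 0"
  proof -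
    have "U 1 \<inter> U 2 \<subseteq> {0}"
    proof
      fix x assume "x \<in> U 1 \<inter> U 2"
      moreover have "orth (U 1) (U 2)" using "0.prems"(2)[of 1] by (simp add: numeral_2_eq_2)
      ultimately have "x \<bullet> x = 0" unfolding orth_def by blast
      then show "x \<in> {0}" by simp
    qed
    then show ?thesis by simp
  qed
  moreover have "dim (U 0) + dim (U 1) + dim (U 2) \<le> DIM('a) + dim (U 1 \<inter> U 2)"
  proof (rule orth_three)
    show "subspace (U 0)" "subspace (U 1)" "subspace (U 2)" using "0.prems"(1) by auto
    show "orth (U 0) (U 1)" using "0.prems"(2)[of 0] by simp
    have "orth (U 2) (U 0)" using "0.prems"(3) by (simp add: numeral_2_eq_2)
    then show "orth (U 0) (U 2)" by (rule orth_sym)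
  qed
  moreover have "(\<Sum>i<2*0+3. dim (U i)) = dim (U 0) + dim (U 1) + dim (U 2)"
    by (simp add: numeral_3_eq_3 numeral_2_eq_2)
  ultimately show ?case by (simp del: dim_eq_0)
next
  case (Suc m)
  define n where "n = 2*m+4"
  define K where "K = U 1 \<inter> U n"
  define V where "V = (\<lambda>i. if i = 0 then K else U (Suc i))"
  have sK: "subspace K" unfolding K_def using Suc.prems(1) subspace_inter by blast
  have sV: "\<And>i. subspace (V i)" unfolding V_def using sK Suc.prems(1) by auto
  have oV: "\<And>i. i < 2*m+2 \<Longrightarrow> orth (V i) (V (Suc i))"
  proof -
    fix i assume i: "i < 2*m+2"
    show "orth (V i) (V (Suc i))"
    proof (cases "i = 0")
      case True
      then show ?thesis unfolding V_def K_def using Suc.prems(2)[of 1]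
        by (auto intro: orth_mono)
    next
      case False
      then show ?thesis unfolding V_def using Suc.prems(2)[of "Suc i"] i by auto
    qed
  qed
  have oV2: "orth (V (2*m+2)) (V 0)"
    unfolding V_def K_def n_def using Suc.prems(2)[of "2*m+3"]
    by (auto intro: orth_mono simp: numeral_eq_Suc)
  have IH: "(\<Sum>i<2*m+3. dim (V i)) \<le> (m+1) * DIM('a)"
    using Suc.IH[OF sV oV oV2] .
  have e1: "(\<Sum>i<2*m+3. dim (V i)) = dim K + (\<Sum>i\<in>{2..<2*m+4}. dim (U i))"
  proof -
    have "{..<2*m+3} = insert 0 {1..<2*m+3}" by auto
    then have s1: "(\<Sum>i<2*m+3. dim (V i)) = dim (V 0) + (\<Sum>i\<in>{1..<2*m+3}. dim (V i))"
      by simp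
    have s2: "(\<Sum>i\<in>{1..<2*m+3}. dim (V i)) = (\<Sum>i\<in>{1..<2*m+3}. dim (U (Suc i)))"
      by (rule sum.cong) (auto simp: V_def)
    have s3: "(\<Sum>i\<in>{1..<2*m+3}. dim (U (Suc i))) = (\<Sum>i\<in>{2..<2*m+4}. dim (U i))"
      by (rule sum.reindex_bij_witness[of _ "\<lambda>i. i - 1" "\<lambda>i. Suc i"]) auto
    have "V 0 = K" unfolding V_def by simp
    then show ?thesis using s1 s2 s3 by simp
  qed
  have e2: "(\<Sum>i<2*Suc m+3. dim (U i)) = dim (U 0) + dim (U 1) + (\<Sum>i\<in>{2..<2*m+4}. dim (U i)) + dim (U n)"
  proof -
    have a1: "2*Suc m+3 = Suc n" unfolding n_def by simp
    have a2: "(\<Sum>i<2*Suc m+3. dim (U i)) = (\<Sum>i<n. dim (U i)) + dim (U n)"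
      unfolding a1 by (simp only: sum.lessThan_Suc)
    have a3: "(\<Sum>i\<in>{0..<2}. dim (U i)) + (\<Sum>i\<in>{2..<n}. dim (U i)) = (\<Sum>i\<in>{0..<n}. dim (U i))"
      by (rule sum.atLeastLessThan_concat) (auto simp: n_def)
    have a4: "(\<Sum>i\<in>{0..<2}. dim (U i)) = dim (U 0) + dim (U 1)" by (simp add: numeral_2_eq_2)
    show ?thesis using a2 a3 a4 unfolding n_def by (simp add: atLeast0LessThan)
  qed
  have t: "dim (U 0) + dim (U 1) + dim (U n) \<le> DIM('a) + dim K"
    unfolding K_def
  proof (rule orth_three)
    show "subspace (U 0)" "subspace (U 1)" "subspace (U n)" using Suc.prems(1) by auto
    show "orth (U 0) (U 1)" using Suc.prems(2)[of 0] by simp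
    have "2 * Suc m + 2 = n" unfolding n_def by simp
    then show "orth (U 0) (U n)" using orth_sym[OF Suc.prems(3)] by simp
  qed
  show ?case using IH e1 e2 t by (simp del: dim_eq_0)
qed

lemma even_cycle_dim:
  fixes U :: "nat \<Rightarrow> 'a::euclidean_space set"
  assumes "\<And>i. subspace (U i)"
    and "\<And>i. Suc i < 2*m \<Longrightarrow> orth (U i) (U (Suc i))"
  shows "(\<Sum>i<2*m. dim (U i)) \<le> m * DIM('a)"
  using assms
proof (induction m)
  case 0 then show ?case by simp
next
  case (Suc m)
  have "(\<Sum>i<2*m. dim (U i)) \<le> m * DIM('a)" using Suc by simp
  moreover have "dim (U (2*m)) + dim (U (Suc (2*m))) \<le> DIM('a)"
    using orth_sum_dim[OF Suc.prems(1) Suc.prems(1) Suc.prems(2)[of "2*m"]] by simp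
  ultimately show ?case by simp
qed


lemma no_loop: "simple_graph k E \<Longrightarrow> {a, a} \<notin> E"
  unfolding simple_graph_def by (auto simp: doubleton_eq_iff)

lemma cycle_edge:
  assumes "is_cycle k E vs" "length vs = g" "g > 0"
  shows "{vs ! (t mod g), vs ! (Suc t mod g)} \<in> E"
proof -
  have "t mod g < length vs" using assms by simp
  then have "{vs ! (t mod g), vs ! ((t mod g + 1) mod length vs)} \<in> E"
    using assms(1) unfolding is_cycle_def by blast
  then show ?thesis using assms(2) by (simp add: mod_Suc_eq)
qed

lemma mod_inj_aux:
  fixes s t g :: nat
  assumes "s mod g = t mod g" "a \<le> s" "a \<le> t" "s < b" "t < b" "b \<le> a + g"
  shows "s = t"
proof (rule ccontr)
  assume ne: "s \<noteq> t"
  show False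
  proof (cases "s < t")
    case True
    then have "g dvd t - s" using assms(1) mod_eq_dvd_iff_nat[of s t g] by simp
    moreover have "0 < t - s" "t - s < g" using True assms by auto
    ultimately show False using nat_dvd_not_less by blast
  next
    case False
    then have "t < s" using ne by simp
    then have "g dvd s - t" using assms(1) mod_eq_dvd_iff_nat[of t s g] by simp
    moreover have "0 < s - t" "s - t < g" using \<open>t < s\<close> assms by auto
    ultimately show False using nat_dvd_not_less by blast
  qed
qed

definition seg :: "nat list \<Rightarrow> nat \<Rightarrow> nat \<Rightarrow> nat list" where
  "seg vs a b = map (\<lambda>t. vs ! (t mod length vs)) [a..<b]"

lemma seg_props:
  assumes "is_cycle k E vs" "a < b" "b \<le> a + length vs"
  shows "distinct (seg vs a b)" "set (seg vs a b) \<subseteq> set vs" "length (seg vs a b) = b - a"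
    "\<And>i. Suc i < b - a \<Longrightarrow> {seg vs a b ! i, seg vs a b ! Suc i} \<in> E"
    "hd (seg vs a b) = vs ! (a mod length vs)"
    "last (seg vs a b) = vs ! ((b - 1) mod length vs)"
proof -
  let ?g = "length vs"
  have g0: "?g > 0"
  proof -
    have "3 \<le> ?g" using assms(1) unfolding is_cycle_def by blast
    then show ?thesis by linarith
  qed
  have dv: "distinct vs" using assms(1) unfolding is_cycle_def by simp
  show "distinct (seg vs a b)" unfolding seg_def
  proof (rule distinct_map[THEN iffD2], intro conjI)
    show "inj_on (\<lambda>t. vs ! (t mod ?g)) (set [a..<b])"
    proof (rule inj_onI)
      fix s t assume s: "s \<in> set [a..<b]" and t: "t \<in> set [a..<b]" and e: "vs ! (s mod ?g) = vs ! (t mod ?g)"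
      have "s mod ?g < ?g" "t mod ?g < ?g" using g0 by auto
      then have "s mod ?g = t mod ?g" using e dv nth_eq_iff_index_eq by blast
      then show "s = t" using mod_inj_aux[of s ?g t a b] s t assms(3) by auto
    qed
  qed simp
  show "set (seg vs a b) \<subseteq> set vs" unfolding seg_def using g0 by auto
  show "length (seg vs a b) = b - a" unfolding seg_def by simp
  show "\<And>i. Suc i < b - a \<Longrightarrow> {seg vs a b ! i, seg vs a b ! Suc i} \<in> E"
  proof -
    fix i assume "Suc i < b - a"
    then have "seg vs a b ! i = vs ! ((a+i) mod ?g)" "seg vs a b ! Suc i = vs ! (Suc (a+i) mod ?g)"
      unfolding seg_def by auto
    then show "{seg vs a b ! i, seg vs a b ! Suc i} \<in> E" using cycle_edge[OF assms(1) refl g0] by simp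
  qed
  show "hd (seg vs a b) = vs ! (a mod ?g)" unfolding seg_def using assms(2)
    by (simp add: hd_map upt_conv_Cons)
  show "last (seg vs a b) = vs ! ((b - 1) mod ?g)" unfolding seg_def using assms(2)
    by (simp add: last_map)
qed

lemma path_to_cycle:
  assumes "length xs \<ge> 3" "distinct xs" "set xs \<subseteq> {1..k}"
    "\<And>i. Suc i < length xs \<Longrightarrow> {xs ! i, xs ! Suc i} \<in> E"
    "{last xs, hd xs} \<in> E"
  shows "is_cycle k E xs"
  unfolding is_cycle_def
proof (intro conjI allI impI)
  fix i assume i: "i < length xs"
  show "{xs ! i, xs ! ((i + 1) mod length xs)} \<in> E"
  proof (cases "Suc i < length xs")
    case True then show ?thesis using assms(4) by simp
  next
    case False
    then have "i = length xs - 1" using i by simp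
    moreover have "xs \<noteq> []" using assms(1) by auto
    ultimately show ?thesis using assms(5) i by (simp add: last_conv_nth hd_conv_nth)
  qed
qed (use assms in auto)

lemma cons_path_to_cycle:
  assumes "length xs \<ge> 2" "distinct xs" "set xs \<subseteq> {1..k}" "w \<in> {1..k}" "w \<notin> set xs"
    "\<And>i. Suc i < length xs \<Longrightarrow> {xs ! i, xs ! Suc i} \<in> E"
    "{w, hd xs} \<in> E" "{last xs, w} \<in> E"
  shows "is_cycle k E (w # xs)"
proof (rule path_to_cycle)
  have ne: "xs \<noteq> []" using assms(1) by auto
  show "\<And>i. Suc i < length (w # xs) \<Longrightarrow> {(w # xs) ! i, (w # xs) ! Suc i} \<in> E"
  proof -
    fix i assume i: "Suc i < length (w # xs)"
    show "{(w # xs) ! i, (w # xs) ! Suc i} \<in> E"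
    proof (cases i)
      case 0 then show ?thesis using assms(7) ne by (simp add: hd_conv_nth)
    next
      case (Suc j) then show ?thesis using assms(6)[of j] i by simp
    qed
  qed
  show "{last (w # xs), hd (w # xs)} \<in> E" using assms(8) ne by simp
qed (use assms in auto)

lemma girth_min: "has_girth k E g \<Longrightarrow> is_cycle k E vs \<Longrightarrow> g \<le> length vs"
  unfolding has_girth_def by blast

lemma chord_free:
  assumes G: "has_girth k E g" and C: "is_cycle k E vs" "length vs = g"
    and j: "j < j'" "j' < g" and e: "{vs ! j, vs ! j'} \<in> E"
  shows "j' = Suc j \<or> (j = 0 \<and> j' = g - 1)"
proof (rule ccontr)
  assume n: "\<not> (j' = Suc j \<or> (j = 0 \<and> j' = g - 1))"
  let ?xs = "seg vs j (Suc j')"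
  have b: "Suc j' \<le> j + length vs" using j C by simp
  have jj: "j < Suc j'" using j by simp
  note sp = seg_props[OF C(1) jj b]
  have vsk: "set vs \<subseteq> {1..k}" using C(1) unfolding is_cycle_def by blast
  have n1: "j' \<noteq> Suc j" "\<not> (j = 0 \<and> j' = g - 1)" using n by auto
  have "is_cycle k E ?xs"
  proof (rule path_to_cycle)
    show "length ?xs \<ge> 3" using sp(3) j n1 by simp
    show "distinct ?xs" using sp(1) by simp
    show "set ?xs \<subseteq> {1..k}" using sp(2) vsk by blast
    show "\<And>i. Suc i < length ?xs \<Longrightarrow> {?xs ! i, ?xs ! Suc i} \<in> E" using sp(3,4) j by simp
    have "last ?xs = vs ! j'" "hd ?xs = vs ! j" using sp(5,6) j C(2) by auto
    then show "{last ?xs, hd ?xs} \<in> E" using e by (simp add: insert_commute)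
  qed
  moreover have "length ?xs < g" using sp(3) j n1 by (cases "j = 0") auto
  ultimately show False using girth_min[OF G] by fastforce
qed

lemma outside_one:
  assumes G: "has_girth k E g" and C: "is_cycle k E vs" "length vs = g" and g5: "g \<ge> 5"
    and w: "w \<in> {1..k}" "w \<notin> set vs"
    and j: "j < j'" "j' < g" and e: "{w, vs ! j} \<in> E" "{w, vs ! j'} \<in> E"
  shows False
proof (cases "j' - j \<le> 2")
  case True
  let ?xs = "seg vs j (Suc j')"
  have b: "Suc j' \<le> j + length vs" using j C g5 True by simp
  have jj: "j < Suc j'" using j by simp
  note sp = seg_props[OF C(1) jj b]
  have vsk: "set vs \<subseteq> {1..k}" using C(1) unfolding is_cycle_def by blast
  have "is_cycle k E (w # ?xs)"
  proof (rule cons_path_to_cycle)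
    show "length ?xs \<ge> 2" using sp(3) j by simp
    show "distinct ?xs" using sp(1) by simp
    show "set ?xs \<subseteq> {1..k}" using sp(2) vsk by blast
    show "w \<notin> set ?xs" using sp(2) w by blast
    show "\<And>i. Suc i < length ?xs \<Longrightarrow> {?xs ! i, ?xs ! Suc i} \<in> E" using sp(3,4) j by simp
    have "last ?xs = vs ! j'" "hd ?xs = vs ! j" using sp(5,6) j C(2) by auto
    then show "{w, hd ?xs} \<in> E" "{last ?xs, w} \<in> E" using e by (auto simp: insert_commute)
  qed (use w in auto)
  moreover have "length (w # ?xs) < g" using sp(3) j True g5 by simp
  ultimately show False using girth_min[OF G] by fastforce
next
  case False
  let ?xs = "seg vs j' (Suc (g + j))"
  have b: "Suc (g + j) \<le> j' + length vs" using j C by simp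
  have jj: "j' < Suc (g + j)" using j by simp
  note sp = seg_props[OF C(1) jj b]
  have vsk: "set vs \<subseteq> {1..k}" using C(1) unfolding is_cycle_def by blast
  have "is_cycle k E (w # ?xs)"
  proof (rule cons_path_to_cycle)
    show "length ?xs \<ge> 2" using sp(3) j by simp
    show "distinct ?xs" using sp(1) by simp
    show "set ?xs \<subseteq> {1..k}" using sp(2) vsk by blast
    show "w \<notin> set ?xs" using sp(2) w by blast
    show "\<And>i. Suc i < length ?xs \<Longrightarrow> {?xs ! i, ?xs ! Suc i} \<in> E" using sp(3,4) j by simp
    have "(g + j) mod g = j" using j by simp
    then have "last ?xs = vs ! j" "hd ?xs = vs ! j'" using sp(5,6) j C(2) by auto
    then show "{w, hd ?xs} \<in> E" "{last ?xs, w} \<in> E" using e by (auto simp: insert_commute)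
  qed (use w in auto)
  moreover have "length (w # ?xs) < g" using sp(3) j False by simp
  ultimately show False using girth_min[OF G] by fastforce
qed


lemma unit_dist_orth_gen:
  fixes p p0 q q0 :: "'a::euclidean_space"
  assumes "dist p q = 1" "dist p q0 = 1" "dist p0 q = 1" "dist p0 q0 = 1"
  shows "(p - p0) \<bullet> (q - q0) = 0"
proof -
  have sq: "\<And>x y::'a. dist x y = 1 \<Longrightarrow> (x - y) \<bullet> (x - y) = 1"
    by (metis dist_norm power2_norm_eq_inner power_one)
  have "(p - q) \<bullet> (p - q) - (p - q0) \<bullet> (p - q0) - (p0 - q) \<bullet> (p0 - q) + (p0 - q0) \<bullet> (p0 - q0) = 0"
    using sq[OF assms(1)] sq[OF assms(2)] sq[OF assms(3)] sq[OF assms(4)] by simp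
  moreover have "(p - q) \<bullet> (p - q) - (p - q0) \<bullet> (p - q0) - (p0 - q) \<bullet> (p0 - q) + (p0 - q0) \<bullet> (p0 - q0)
      = -2 * ((p - p0) \<bullet> (q - q0))"
    by (simp add: inner_diff_left inner_diff_right inner_commute algebra_simps)
  ultimately show ?thesis by simp
qed

lemma unit_dist_orth:
  fixes P Q :: "'a::euclidean_space set"
  assumes "\<forall>p\<in>P. \<forall>q\<in>Q. dist p q = 1" "p0 \<in> P" "q0 \<in> Q"
  shows "orth (span ((\<lambda>p. p - p0) ` P)) (span ((\<lambda>q. q - q0) ` Q))"
  unfolding orth_def
proof (intro ballI)
  fix x y assume x: "x \<in> span ((\<lambda>p. p - p0) ` P)" and y: "y \<in> span ((\<lambda>q. q - q0) ` Q)"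
  have gen: "\<And>a b. a \<in> (\<lambda>p. p - p0) ` P \<Longrightarrow> b \<in> (\<lambda>q. q - q0) ` Q \<Longrightarrow> orthogonal a b"
    unfolding orthogonal_def using assms unit_dist_orth_gen by blast
  have "\<And>a. a \<in> (\<lambda>p. p - p0) ` P \<Longrightarrow> orthogonal a y"
    using orthogonal_to_span[OF y] gen by blast
  then have "orthogonal y x"
    using orthogonal_to_span[OF x] orthogonal_commute by blast
  then show "x \<bullet> y = 0" by (simp add: orthogonal_def inner_commute)
qed

lemma profile_le_dim:
  fixes P :: "'a::euclidean_space set"
  assumes "finite P" "profile_val P \<ge> 2" "\<forall>p\<in>P. dist p q = 1" "p0 \<in> P"
  shows "profile_val P \<le> dim ((\<lambda>p. p - p0) ` P)"
proof -
  have c: "\<not> card P \<le> 3"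
  proof
    assume "card P \<le> 3" then have "profile_val P = 0" unfolding profile_val_def by simp
    then show False using assms(2) by simp
  qed
  define T where "T = insert q P"
  define m where "m = aff_dim T"
  have qp: "q \<noteq> p0" using assms(3,4) by fastforce
  have m1: "m \<ge> 1"
  proof -
    have "T \<noteq> {}" unfolding T_def by simp
    then have "m \<noteq> -1" unfolding m_def using aff_dim_empty by blast
    moreover have "m \<noteq> 0"
    proof
      assume "m = 0" then obtain a where "T = {a}" unfolding m_def using aff_dim_eq_0 by blast
      then show False using qp assms(4) unfolding T_def by auto
    qed
    moreover have "m \<ge> -1" unfolding m_def by (rule aff_dim_geq)
    ultimately show ?thesis by linarith
  qed
  have mle: "m \<le> aff_dim P + 1" unfolding m_def T_def using aff_dim_insert[of q P] by auto
  have ad: "aff_dim P = int (dim ((\<lambda>p. p - p0) ` P))"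
    using aff_dim_eq_dim_subtract[of p0 P] hull_inc[OF assms(4)] by simp
  define l where "l = nat m - 1"
  have lm: "int l + 1 = m" unfolding l_def using m1 by simp
  define S where "S = {x \<in> affine hull T. dist x q = 1}"
  have sph: "is_sphere S l" unfolding is_sphere_def S_def
    by (rule exI[of _ "affine hull T"], rule exI[of _ q], rule exI[of _ 1])
       (auto simp: lm m_def T_def hull_inc)
  have PS: "P \<subseteq> S" unfolding S_def T_def using assms(3) by (auto simp: hull_inc)
  have ex: "\<exists>l S. is_sphere S l \<and> P \<subseteq> S" using sph PS by blast
  have "profile_val P = (LEAST l. \<exists>S. is_sphere S l \<and> P \<subseteq> S)"
    unfolding profile_val_def using c ex by simp
  also have "\<dots> \<le> l" by (rule Least_le) (use sph PS in blast)
  finally have "int (profile_val P) \<le> int l" by simp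
  with lm mle ad show ?thesis by linarith
qed

lemma card3: "card {a, b, c :: nat} \<le> 3"
  by (simp add: card_insert_if)

lemma main_bound:
  fixes k :: nat and E :: "nat set set" and lam :: "nat \<Rightarrow> nat"
  assumes sg: "simple_graph k E"
    and R: "realisable_with_profile TYPE('a::euclidean_space) k E lam"
    and L: "\<forall>i \<in> {1..k}. lam i \<ge> 2" and G: "has_girth k E g" and g5: "g \<ge> 5"
  shows "zeta k E lam \<le> real (g div 2) * real DIM('a) / real (g - 1)"
proof -
  obtain P :: "nat \<Rightarrow> 'a set" where PF: "\<forall>i\<in>{1..k}. finite (P i) \<and> profile_val (P i) = lam i"
    and PC: "compatible E P"
    using R unfolding realisable_with_profile_def by blast
  obtain vs where C: "is_cycle k E vs" "length vs = g" using G unfolding has_girth_def by blast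
  have vsk: "set vs \<subseteq> {1..k}" and dv: "distinct vs" using C(1) unfolding is_cycle_def by auto
  have g0: "g > 0" using g5 by simp
  have inK: "\<And>j. j < g \<Longrightarrow> vs ! j \<in> {1..k}" using vsk C(2) nth_mem by blast
  have ne: "\<And>i. i \<in> {1..k} \<Longrightarrow> P i \<noteq> {}"
  proof
    fix i assume i: "i \<in> {1..k}" and e: "P i = {}"
    then have "profile_val (P i) = 0" unfolding profile_val_def by simp
    then show False using PF L i by fastforce
  qed
  define p0 where "p0 j = (SOME p. p \<in> P (vs ! j))" for j
  have p0: "\<And>j. j < g \<Longrightarrow> p0 j \<in> P (vs ! j)"
    unfolding p0_def using ne inK by (metis ex_in_conv someI_ex)
  define W where "W j = span ((\<lambda>p. p - p0 j) ` P (vs ! j))" for j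
  have sW: "\<And>j. subspace (W j)" unfolding W_def by simp
  have edge: "\<And>j. j < g \<Longrightarrow> {vs ! j, vs ! (Suc j mod g)} \<in> E"
    using cycle_edge[OF C g0] by (metis mod_less)
  have dst: "\<And>j p q. j < g \<Longrightarrow> p \<in> P (vs ! j) \<Longrightarrow> q \<in> P (vs ! (Suc j mod g)) \<Longrightarrow> dist p q = 1"
    using PC edge unfolding compatible_def by blast
  have sj: "\<And>j. Suc j mod g < g" using g0 by simp
  have orthW: "orth (W j) (W (Suc j mod g))" if j: "j < g" for j
  proof -
    have "\<forall>p\<in>P (vs ! j). \<forall>q\<in>P (vs ! (Suc j mod g)). dist p q = 1"
      using dst[OF j] by blast
    then show ?thesis unfolding W_def by (rule unit_dist_orth[OF _ p0[OF j] p0[OF sj]])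
  qed
  have lamle: "\<And>j. j < g \<Longrightarrow> lam (vs ! j) \<le> dim (W j)"
  proof -
    fix j assume j: "j < g"
    have "profile_val (P (vs ! j)) \<le> dim ((\<lambda>p. p - p0 j) ` P (vs ! j))"
    proof (rule profile_le_dim)
      show "finite (P (vs ! j))" using PF inK j by blast
      show "2 \<le> profile_val (P (vs ! j))" using PF L inK j by auto
      show "\<forall>p\<in>P (vs ! j). dist p (p0 (Suc j mod g)) = 1"
        by (intro ballI) (rule dst[OF j _ p0[OF sj]])
      show "p0 j \<in> P (vs ! j)" using p0 j by blast
    qed
    then show "lam (vs ! j) \<le> dim (W j)" unfolding W_def using PF inK j by simp
  qed
  have sumdim: "(\<Sum>j<g. dim (W j)) \<le> (g div 2) * DIM('a)"
  proof (cases "even g")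
    case True
    then obtain m where m: "g = 2 * m" by blast
    have "(\<Sum>j<2*m. dim (W j)) \<le> m * DIM('a)"
    proof (rule even_cycle_dim)
      show "\<And>i. subspace (W i)" by (rule sW)
      fix i assume "Suc i < 2 * m"
      then show "orth (W i) (W (Suc i))" using orthW[of i] m by simp
    qed
    then show ?thesis using m by simp
  next
    case False
    define m where "m = g div 2 - 1"
    have m: "g = 2 * m + 3" using False g5 unfolding m_def by presburger
    have "(\<Sum>j<2*m+3. dim (W j)) \<le> (m+1) * DIM('a)"
    proof (rule odd_cycle_dim)
      show "\<And>i. subspace (W i)" by (rule sW)
      fix i assume i: "i < 2 * m + 2"
      then have "Suc i mod g = Suc i" "i < g" using m by auto
      then show "orth (W i) (W (Suc i))" using orthW[of i] by simp
    next
      have lt: "2 * m + 2 < g" using m by simp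
      have e: "Suc (2 * m + 2) = g" using m by simp
      have z: "Suc (2 * m + 2) mod g = 0" unfolding e by simp
      show "orth (W (2 * m + 2)) (W 0)" using orthW[OF lt] unfolding z .
    qed
    moreover have "g div 2 = m + 1" using m by simp
    ultimately show ?thesis using m by simp
  qed
  have sumlam: "(\<Sum>j<g. lam (vs ! j)) \<le> (g div 2) * DIM('a)"
  proof -
    have "(\<Sum>j<g. lam (vs ! j)) \<le> (\<Sum>j<g. dim (W j))"
      by (rule sum_mono) (use lamle in simp)
    then show ?thesis using sumdim by linarith
  qed
  have sumset: "(\<Sum>i\<in>set vs. real (lam i)) = (\<Sum>j<g. real (lam (vs ! j)))"
  proof -
    have "set vs = (\<lambda>j. vs ! j) ` {..<g}" using C(2) by (auto simp: set_conv_nth)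
    moreover have "inj_on (\<lambda>j. vs ! j) {..<g}" using inj_on_nth[OF dv] C(2) by simp
    ultimately show ?thesis by (simp add: sum.reindex)
  qed
  define a where "a = 1 / real (g - 1)"
  have a0: "a > 0" unfolding a_def using g5 by simp
  define x where "x i = (if i \<in> set vs then a else 0)" for i
  have cost: "(\<Sum>i\<in>{1..k}. real (lam i) * x i) = a * (\<Sum>i\<in>set vs. real (lam i))"
  proof -
    have "(\<Sum>i\<in>{1..k}. real (lam i) * x i) = (\<Sum>i\<in>set vs. real (lam i) * x i)"
      by (rule sum.mono_neutral_right) (use vsk in \<open>auto simp: x_def\<close>)
    also have "\<dots> = (\<Sum>i\<in>set vs. a * real (lam i))" by (simp add: x_def mult.commute)
    finally show ?thesis by (simp add: sum_distrib_left)
  qed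
  have feas: "\<forall>i\<in>{1..k}. x i \<ge> 0 \<and> real (lam i) * x i + (\<Sum>j \<in> nonnbrs k E i. x j) \<ge> 1"
  proof
    fix i assume i: "i \<in> {1..k}"
    define B where "B = {v \<in> set vs. v = i \<or> {i, v} \<in> E}"
    have fN: "finite (nonnbrs k E i)" unfolding nonnbrs_def by simp
    have sN: "(\<Sum>j \<in> nonnbrs k E i. x j) = a * real (card (nonnbrs k E i \<inter> set vs))"
    proof -
      have "(\<Sum>j \<in> nonnbrs k E i. x j) = (\<Sum>j \<in> nonnbrs k E i \<inter> set vs. a)"
        using sum.inter_restrict[OF fN, of "\<lambda>_. a" "set vs"] unfolding x_def by simp
      then show ?thesis by simp
    qed
    have sub: "set vs - B \<subseteq> nonnbrs k E i \<inter> set vs"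
      using vsk unfolding B_def nonnbrs_def by auto
    have cB: "card B \<le> card (set vs)" unfolding B_def by (rule card_mono) auto
    have cnt: "real g - real (card B) \<le> real (card (nonnbrs k E i \<inter> set vs))"
    proof -
      have "card (set vs - B) = card (set vs) - card B"
        by (rule card_Diff_subset) (auto simp: B_def)
      moreover have "card (set vs - B) \<le> card (nonnbrs k E i \<inter> set vs)"
        by (rule card_mono) (use fN sub in auto)
      moreover have "card (set vs) = g" using distinct_card[OF dv] C(2) by simp
      ultimately show ?thesis using cB by linarith
    qed
    have key: "real (lam i) * x i + a * (real g - real (card B)) \<ge> 1"
    proof (cases "i \<in> set vs")
      case True
      then obtain j where j: "j < g" "i = vs ! j" using C(2) by (auto simp: in_set_conv_nth)
      have "B \<subseteq> (\<lambda>t. vs ! t) ` {j, Suc j mod g, (j + g - 1) mod g}"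
      proof
        fix v assume v: "v \<in> B"
        have "v \<in> set vs" using v unfolding B_def by simp
        then obtain j' where j': "j' < g" "v = vs ! j'" using C(2) by (auto simp: in_set_conv_nth)
        have m1: "j' = Suc j \<Longrightarrow> j' = Suc j mod g" using j'(1) by simp
        have m2: "j = 0 \<Longrightarrow> j' = g - 1 \<Longrightarrow> j' = (j + g - 1) mod g" using g0 by simp
        have m3: "j = Suc j' \<Longrightarrow> j' = (j + g - 1) mod g" using j'(1) by simp
        have m4: "j' = 0 \<Longrightarrow> j = g - 1 \<Longrightarrow> j' = Suc j mod g" using g0 by simp
        have "j' \<in> {j, Suc j mod g, (j + g - 1) mod g}"
        proof (cases "v = i")
          case True then have "vs ! j' = vs ! j" using j j' by simp
          then have "j' = j" using nth_eq_iff_index_eq[OF dv] j(1) j'(1) C(2) by simp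
          then show ?thesis by simp
        next
          case False
          then have e: "{vs ! j, vs ! j'} \<in> E" using v j j' unfolding B_def by auto
          have jne: "j \<noteq> j'" using False j j' by auto
          show ?thesis
          proof (cases "j < j'")
            case True
            from chord_free[OF G C True j'(1) e]
            have "j' = Suc j \<or> (j = 0 \<and> j' = g - 1)" .
            then show ?thesis using m1 m2 by blast
          next
            case False
            then have lt: "j' < j" using jne by simp
            have e2: "{vs ! j', vs ! j} \<in> E" using e by (simp add: insert_commute)
            from chord_free[OF G C lt j(1) e2]
            have "j = Suc j' \<or> (j' = 0 \<and> j = g - 1)" .
            then show ?thesis using m3 m4 by blast
          qed
        qed
        then show "v \<in> (\<lambda>t. vs ! t) ` {j, Suc j mod g, (j + g - 1) mod g}"
          using j'(2) by blast
      qed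
      then have "card B \<le> card ((\<lambda>t. vs ! t) ` {j, Suc j mod g, (j + g - 1) mod g})"
        by (rule card_mono[rotated]) simp
      also have "\<dots> \<le> card {j, Suc j mod g, (j + g - 1) mod g}" by (rule card_image_le) simp
      also have "\<dots> \<le> 3" by (rule card3)
      finally have cb: "real (card B) \<le> 3" by simp
      have xi: "x i = a" using True unfolding x_def by simp
      have l2: "real (lam i) \<ge> 2" using L i by auto
      have h2: "a * (real g - 1) = 1" unfolding a_def using g5 by (simp add: of_nat_diff)
      have h1: "real (lam i) * x i \<ge> 2 * a"
        unfolding xi using mult_right_mono[OF l2, of a] a0 by simp
      have h3: "a * (real g - real (card B)) \<ge> a * (real g - 3)"
        using cb a0 by (intro mult_left_mono) auto
      have "2 * a + a * (real g - 3) = a * (real g - 1)" by (simp add: algebra_simps)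
      then show ?thesis using h1 h2 h3 by linarith
    next
      case False
      have "card B \<le> Suc 0"
      proof (subst card_le_Suc0_iff_eq)
        show "finite B" unfolding B_def by simp
        show "\<forall>a1\<in>B. \<forall>a2\<in>B. a1 = a2"
        proof (intro ballI)
          fix v1 v2 assume v1: "v1 \<in> B" and v2: "v2 \<in> B"
          have "v1 \<in> set vs" "v2 \<in> set vs" using v1 v2 unfolding B_def by auto
          then obtain j1 j2 where j1: "j1 < g" "v1 = vs ! j1" and j2: "j2 < g" "v2 = vs ! j2"
            using C(2) by (auto simp: in_set_conv_nth)
          have e1: "{i, vs ! j1} \<in> E" using v1 j1 False unfolding B_def by auto
          have e2: "{i, vs ! j2} \<in> E" using v2 j2 False unfolding B_def by auto
          show "v1 = v2"
          proof (rule ccontr)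
            assume "v1 \<noteq> v2"
            then have "j1 \<noteq> j2" using j1 j2 by auto
            then show False
            proof (cases "j1 < j2")
              case True
              show False by (rule outside_one[OF G C g5 i \<open>i \<notin> set vs\<close> True j2(1) e1 e2])
            next
              case False
              then have "j2 < j1" using \<open>j1 \<noteq> j2\<close> by simp
              then show False by (rule outside_one[OF G C g5 i \<open>i \<notin> set vs\<close> _ j1(1) e2 e1])
            qed
          qed
        qed
      qed
      then have "real (card B) \<le> 1" by simp
      moreover have "a * (real g - 1) = 1" unfolding a_def using g5 by (simp add: of_nat_diff)
      moreover have "x i = 0" using False unfolding x_def by simp
      ultimately have h2: "a * (real g - 1) = 1" and h1: "real (lam i) * x i = 0"
        and cb: "real (card B) \<le> 1" by auto
      have h3: "a * (real g - real (card B)) \<ge> a * (real g - 1)"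
        using cb a0 by (intro mult_left_mono) auto
      then show ?thesis using h1 h2 by linarith
    qed
    show "x i \<ge> 0 \<and> real (lam i) * x i + (\<Sum>j \<in> nonnbrs k E i. x j) \<ge> 1"
    proof
      show "x i \<ge> 0" unfolding x_def using a0 by simp
      have "a * (real g - real (card B)) \<le> a * real (card (nonnbrs k E i \<inter> set vs))"
        using cnt a0 by simp
      then show "real (lam i) * x i + (\<Sum>j \<in> nonnbrs k E i. x j) \<ge> 1" using key sN by linarith
    qed
  qed
  let ?X = "{(\<Sum>i\<in>{1..k}. real (lam i) * x i) | x :: nat \<Rightarrow> real.
      \<forall>i \<in> {1..k}. x i \<ge> 0 \<and> real (lam i) * x i + (\<Sum>j \<in> nonnbrs k E i. x j) \<ge> 1}"
  have mem: "(\<Sum>i\<in>{1..k}. real (lam i) * x i) \<in> ?X" using feas by blast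
  have bdd: "bdd_below ?X"
  proof (rule bdd_belowI[of _ 0])
    fix y assume "y \<in> ?X"
    then obtain z :: "nat \<Rightarrow> real" where "y = (\<Sum>i\<in>{1..k}. real (lam i) * z i)" "\<forall>i \<in> {1..k}. z i \<ge> 0"
      by blast
    then show "0 \<le> y" by (auto intro!: sum_nonneg)
  qed
  have "zeta k E lam \<le> (\<Sum>i\<in>{1..k}. real (lam i) * x i)"
    unfolding zeta_def by (rule cInf_lower[OF mem bdd])
  also have "\<dots> = a * (\<Sum>j<g. real (lam (vs ! j)))" using cost sumset by simp
  also have "\<dots> \<le> a * (real (g div 2) * real DIM('a))"
  proof -
    have "(\<Sum>j<g. real (lam (vs ! j))) \<le> real (g div 2) * real DIM('a)"
    proof -
      have "real (\<Sum>j<g. lam (vs ! j)) \<le> real ((g div 2) * DIM('a))"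
        using sumlam by (simp only: of_nat_le_iff)
      then show ?thesis by simp
    qed
    then show ?thesis using a0 by simp
  qed
  also have "\<dots> = real (g div 2) * real DIM('a) / real (g - 1)" unfolding a_def by simp
  finally show ?thesis .
qed

theorem theorem11p3:
  fixes k :: nat and E :: "nat set set" and lam :: "nat \<Rightarrow> nat"
  assumes "simple_graph k E"
    and "realisable_with_profile TYPE('a::euclidean_space) k E lam"
    and "\<forall>i \<in> {1..k}. lam i \<ge> 2"
  shows "(\<forall>l::nat. l > 1 \<longrightarrow> has_girth k E (2 * l + 1) \<longrightarrow>
            zeta k E lam \<le> real DIM('a) / 2) \<and>
         (\<forall>l::nat. l > 2 \<longrightarrow> has_girth k E (2 * l) \<longrightarrow>
            zeta k E lam \<le> real l / (2 * real l - 1) * real DIM('a))"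
proof (intro conjI allI impI)
  fix l :: nat assume l: "l > 1" and G: "has_girth k E (2 * l + 1)"
  have g5: "2 * l + 1 \<ge> 5" using l by simp
  have b: "zeta k E lam \<le> real ((2*l+1) div 2) * real DIM('a) / real (2*l+1 - 1)"
    by (rule main_bound[OF assms G g5])
  have e1: "(2*l+1) div 2 = l" by simp
  have e2: "real (2*l+1 - 1) = 2 * real l" by simp
  have e3: "real l * real DIM('a) / (2 * real l) = real DIM('a) / 2" using l by simp
  show "zeta k E lam \<le> real DIM('a) / 2" using b unfolding e1 e2 e3 .
next
  fix l :: nat assume l: "l > 2" and G: "has_girth k E (2 * l)"
  have g5: "2 * l \<ge> 5" using l by simp
  have b: "zeta k E lam \<le> real ((2*l) div 2) * real DIM('a) / real (2*l - 1)"
    by (rule main_bound[OF assms G g5])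
  have e1: "(2*l) div 2 = l" by simp
  have e2: "real (2*l - 1) = 2 * real l - 1" using l by (simp add: of_nat_diff)
  have e3: "real l * real DIM('a) / (2 * real l - 1) = real l / (2 * real l - 1) * real DIM('a)"
    by simp
  show "zeta k E lam \<le> real l / (2 * real l - 1) * real DIM('a)" using b unfolding e1 e2 e3 .
qed

end
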